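(* Let $\mathbb{X},\mathbb{Y}$ be real normed linear spaces and let $T\in\mathbb{B}(\mathbb{X},\mathbb{Y})$ be a smooth point of $\mathbb{B}(\mathbb{X},\mathbb{Y})$ with $M_T\neq\emptyset$. Then: (i) $M_T=\{\pm x_0\}$ for some $x_0\in S_{\mathbb{X}}$; (ii) $Tx_0$ is a smooth point of $\mathbb{Y}$; (iii) for every norming sequence $\{x_n\}$ for $T$, $x_0\in\overline{\operatorname{span}\{x_n:n\in\mathbb{N}\}}$.
   Context: All spaces are real; $\mathbb{B}(\mathbb{X},\mathbb{Y})$ has the operator norm; $S_{\mathbb{X}}$ is the unit sphere; $M_T=\{x\in S_{\mathbb{X}}:\|Tx\|=\|T\|\}$. A norming sequence for $T$ is $\{x_n\}\subseteq S_{\mathbb{X}}$ with $\|Tx_n\|\to\|T\|$. A nonzero element $x$ of a normed space $\mathbb{Z}$ is smooth if there is a unique $f\in\mathbb{Z}^*$ with $\|f\|=1$ and $f(x)=\|x\|$. *)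

theory Defs
  imports "HOL-Analysis.Analysis"
begin

definition smooth_point :: "'a::real_normed_vector \<Rightarrow> bool" where
  "smooth_point x \<longleftrightarrow> x \<noteq> 0 \<and>
     (\<exists>!f::'a \<Rightarrow>\<^sub>L real. norm f = 1 \<and> blinfun_apply f x = norm x)"

definition norm_attainment_set ::
  "('a::real_normed_vector \<Rightarrow>\<^sub>L 'b::real_normed_vector) \<Rightarrow> 'a set" where
  "norm_attainment_set T = {x. norm x = 1 \<and> norm (blinfun_apply T x) = norm T}"

definition norming_sequence ::
  "('a::real_normed_vector \<Rightarrow>\<^sub>L 'b::real_normed_vector) \<Rightarrow> (nat \<Rightarrow> 'a) \<Rightarrow> bool" where
  "norming_sequence T xs \<longleftrightarrow> (\<forall>n. norm (xs n) = 1) \<and>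
     (\<lambda>n. norm (blinfun_apply T (xs n))) \<longlonglongrightarrow> norm T"

end

theory Submission
  imports Defs
begin

definition sublin :: "('v::real_vector \<Rightarrow> real) \<Rightarrow> bool" where
  "sublin p \<longleftrightarrow> (\<forall>x y. p (x + y) \<le> p x + p y) \<and> (\<forall>c x. 0 \<le> c \<longrightarrow> p (c *\<^sub>R x) = c * p x)"

lemma sublin_add: "sublin p \<Longrightarrow> p (x + y) \<le> p x + p y"
  by (simp add: sublin_def)
lemma sublin_scale: "sublin p \<Longrightarrow> 0 \<le> c \<Longrightarrow> p (c *\<^sub>R x) = c * p x"
  by (simp add: sublin_def)
lemma sublin_0: "sublin p \<Longrightarrow> p 0 = 0"
  using sublin_scale[of p 0 0] by simp
lemma sublin_lower: "sublin p \<Longrightarrow> - p (- x) \<le> p x"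
  using sublin_add[of p x "-x"] sublin_0[of p] by simp

lemma minimal_sublin_linear:
  fixes m :: "'v::real_vector \<Rightarrow> real"
  assumes sm: "sublin m"
    and minl: "\<And>q. sublin q \<Longrightarrow> (\<forall>x. q x \<le> m x) \<Longrightarrow> q = m"
  shows "linear m"
proof -
  have neg: "m (- z) = - m z" for z
  proof -
    define q where "q y = (INF t\<in>{0::real..}. m (y + t *\<^sub>R z) - t * m z)" for y
    have lb: "- m (- y) \<le> m (y + t *\<^sub>R z) - t * m z" if "t \<ge> 0" for y t
    proof -
      have "m (t *\<^sub>R z) \<le> m (y + t *\<^sub>R z) + m (- y)"
        using sublin_add[OF sm, of "y + t *\<^sub>R z" "- y"] by simp
      then show ?thesis using sublin_scale[OF sm that] by simp
    qed
    have bdd: "bdd_below ((\<lambda>t. m (y + t *\<^sub>R z) - t * m z) ` {0..})" for y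
      using lb by (auto intro!: bdd_belowI2[where m="- m (- y)"])
    have qle: "q y \<le> m (y + t *\<^sub>R z) - t * m z" if "t \<ge> 0" for y t
      unfolding q_def using that bdd by (intro cINF_lower) auto
    have qge: "a \<le> q y" if "\<And>t. t \<ge> 0 \<Longrightarrow> a \<le> m (y + t *\<^sub>R z) - t * m z" for a y
      unfolding q_def using that by (intro cINF_greatest) auto
    have "sublin q"
      unfolding sublin_def
    proof (intro conjI allI impI)
      fix x y
      have "q (x + y) \<le> (m (x + s *\<^sub>R z) - s * m z) + (m (y + t *\<^sub>R z) - t * m z)"
        if "s \<ge> 0" "t \<ge> 0" for s t
      proof -
        have "q (x + y) \<le> m ((x + y) + (s + t) *\<^sub>R z) - (s + t) * m z"
          using that by (intro qle) auto
        also have "m ((x + y) + (s + t) *\<^sub>R z) \<le> m (x + s *\<^sub>R z) + m (y + t *\<^sub>R z)"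
          using sublin_add[OF sm, of "x + s *\<^sub>R z" "y + t *\<^sub>R z"]
          by (simp add: algebra_simps)
        finally show ?thesis by (simp add: algebra_simps)
      qed
      then have "q (x + y) - (m (y + t *\<^sub>R z) - t * m z) \<le> q x" if "t \<ge> 0" for t
        using that by (intro qge) (auto simp: algebra_simps)
      then have "q (x + y) - q x \<le> q y"
        by (intro qge) (auto simp: algebra_simps)
      then show "q (x + y) \<le> q x + q y" by simp
    next
      fix c :: real and x
      assume c: "0 \<le> c"
      show "q (c *\<^sub>R x) = c * q x"
      proof (cases "c = 0")
        case True
        have "q 0 = 0"
        proof (rule antisym)
          show "q 0 \<le> 0" using qle[of 0 0] sublin_0[OF sm] by simp
          show "0 \<le> q 0" by (intro qge) (simp add: sublin_scale[OF sm])
        qed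
        then show ?thesis using True by simp
      next
        case False
        then have cp: "c > 0" using c by simp
        show ?thesis
        proof (rule antisym)
          have "q (c *\<^sub>R x) \<le> c * (m (x + t *\<^sub>R z) - t * m z)" if "t \<ge> 0" for t
          proof -
            have "q (c *\<^sub>R x) \<le> m (c *\<^sub>R x + (c * t) *\<^sub>R z) - (c * t) * m z"
              using that cp by (intro qle) auto
            also have "m (c *\<^sub>R x + (c * t) *\<^sub>R z) = c * m (x + t *\<^sub>R z)"
              using sublin_scale[OF sm c, of "x + t *\<^sub>R z"] by (simp add: algebra_simps)
            finally show ?thesis by (simp add: algebra_simps)
          qed
          then have "q (c *\<^sub>R x) / c \<le> q x"
            using cp by (intro qge) (simp add: pos_divide_le_eq mult.commute)
          then show "q (c *\<^sub>R x) \<le> c * q x"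
            using cp by (simp add: pos_divide_le_eq mult.commute)
          have "c * q x \<le> m (c *\<^sub>R x + t *\<^sub>R z) - t * m z" if "t \<ge> 0" for t
          proof -
            have "q x \<le> m (x + (t / c) *\<^sub>R z) - (t / c) * m z"
              using that cp by (intro qle) auto
            then have "c * q x \<le> c * (m (x + (t / c) *\<^sub>R z) - (t / c) * m z)"
              using cp by simp
            moreover have "c * m (x + (t / c) *\<^sub>R z) = m (c *\<^sub>R x + t *\<^sub>R z)"
              using sublin_scale[OF sm c, of "x + (t/c) *\<^sub>R z"] cp
              by (simp add: algebra_simps)
            ultimately show ?thesis using cp by (simp add: algebra_simps)
          qed
          then show "c * q x \<le> q (c *\<^sub>R x)"
            by (intro qge) auto
        qed
      qed
    qed
    moreover have "\<forall>x. q x \<le> m x"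
      using qle[of 0] by simp
    ultimately have "q = m" by (rule minl)
    then have "m (- z) \<le> m (- z + 1 *\<^sub>R z) - 1 * m z"
      using qle[of 1 "- z"] by simp
    then have "m (- z) \<le> - m z" by (simp add: sublin_0[OF sm])
    then show ?thesis using sublin_lower[OF sm, of z] by simp
  qed
  show "linear m"
  proof (rule linearI)
    fix x y
    have "m (- (x + y)) \<le> m (- x) + m (- y)"
      using sublin_add[OF sm, of "- x" "- y"] by (simp add: algebra_simps)
    then show "m (x + y) = m x + m y"
      using sublin_add[OF sm, of x y] neg[of "x+y"] neg[of x] neg[of y] by (simp add: algebra_simps)
  next
    fix c :: real and x
    show "m (c *\<^sub>R x) = c *\<^sub>R m x"
    proof (cases "c \<ge> 0")
      case True then show ?thesis using sublin_scale[OF sm] by simp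
    next
      case False
      then have "m (c *\<^sub>R x) = m (- ((- c) *\<^sub>R x))" by simp
      also have "\<dots> = - ((- c) * m x)" using neg sublin_scale[OF sm, of "- c" x] False by simp
      finally show ?thesis by simp
    qed
  qed
qed


lemma sublin_linear_minorant:
  fixes p :: "'v::real_vector \<Rightarrow> real"
  assumes sp: "sublin p"
  shows "\<exists>l. linear l \<and> (\<forall>x. l x \<le> p x)"
proof -
  define A where "A = {q. sublin q \<and> (\<forall>x. q x \<le> p x)}"
  define P where "P a b \<longleftrightarrow> (\<forall>x::'v. b x \<le> a x)" for a b :: "'v \<Rightarrow> real"
  have po: "partial_order_on A (relation_of P A)"
    unfolding partial_order_on_def preorder_on_def refl_on_def trans_def antisym_def
      relation_of_def P_def
    by (auto intro: order_trans intro!: ext antisym)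
  have ch: "\<exists>u\<in>A. \<forall>a\<in>C. P a u" if C: "C \<in> Chains (relation_of P A)" for C
  proof (cases "C = {}")
    case True
    then show ?thesis using sp by (auto simp: A_def)
  next
    case False
    have CA: "C \<subseteq> A"
      using C by (auto simp: Chains_def relation_of_def)
    have tot: "(\<forall>x. b x \<le> a x) \<or> (\<forall>x. a x \<le> b x)" if "a \<in> C" "b \<in> C" for a b
      using C that by (auto simp: Chains_def relation_of_def P_def)
    define u where "u x = (INF q\<in>C. q x)" for x
    have lbq: "- p (- x) \<le> q x" if "q \<in> C" for q x
    proof -
      have "sublin q" "q (- x) \<le> p (- x)" using CA that by (auto simp: A_def)
      then show ?thesis using sublin_lower[of q x] by simp
    qed
    have bdd: "bdd_below ((\<lambda>q. q x) ` C)" for x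
      using lbq by (auto intro!: bdd_belowI2[where m="- p (- x)"])
    have ule: "u x \<le> q x" if "q \<in> C" for q x
      unfolding u_def using that bdd by (intro cINF_lower) auto
    have uge: "a \<le> u x" if "\<And>q. q \<in> C \<Longrightarrow> a \<le> q x" for a x
      unfolding u_def using that False by (intro cINF_greatest) auto
    have "sublin u"
      unfolding sublin_def
    proof (intro conjI allI impI)
      fix x y
      have "u (x + y) \<le> q1 x + q2 y" if "q1 \<in> C" "q2 \<in> C" for q1 q2
      proof -
        have sq: "sublin q1" "sublin q2" using CA that by (auto simp: A_def)
        from tot[OF that] show ?thesis
        proof
          assume "\<forall>x. q2 x \<le> q1 x"
          then have "q2 (x + y) \<le> q1 x + q2 y"
            using sublin_add[OF sq(2), of x y] by (metis add_le_cancel_right order_trans)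
          then show ?thesis using ule[OF that(2)] by (meson order_trans)
        next
          assume "\<forall>x. q1 x \<le> q2 x"
          then have "q1 (x + y) \<le> q1 x + q2 y"
            using sublin_add[OF sq(1), of x y] by (metis add_le_cancel_left order_trans)
          then show ?thesis using ule[OF that(1)] by (meson order_trans)
        qed
      qed
      then have "u (x + y) - q2 y \<le> u x" if "q2 \<in> C" for q2
        using that by (intro uge) (auto simp: algebra_simps)
      then have "u (x + y) - u x \<le> u y"
        by (intro uge) (auto simp: algebra_simps)
      then show "u (x + y) \<le> u x + u y" by simp
    next
      fix c :: real and x
      assume c: "0 \<le> c"
      have sc: "q (c *\<^sub>R z) = c * q z" if "q \<in> C" for q z
        using CA that c by (auto simp: A_def sublin_def)
      show "u (c *\<^sub>R x) = c * u x"
      proof (cases "c = 0")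
        case True
        have "u 0 = 0"
        proof (rule antisym)
          obtain q where "q \<in> C" using False by blast
          then show "u 0 \<le> 0" using ule[of q 0] sc[of q 0] True by simp
          show "0 \<le> u 0" by (intro uge) (metis order_refl sc True mult_zero_left scale_zero_left)
        qed
        then show ?thesis using True by simp
      next
        case False
        then have cp: "c > 0" using c by simp
        show ?thesis
        proof (rule antisym)
          have "u (c *\<^sub>R x) / c \<le> u x"
            using cp ule sc by (intro uge) (simp add: pos_divide_le_eq mult.commute)
          then show "u (c *\<^sub>R x) \<le> c * u x"
            using cp by (simp add: pos_divide_le_eq mult.commute)
          show "c * u x \<le> u (c *\<^sub>R x)"
          proof (intro uge)
            fix q assume qC: "q \<in> C"
            show "c * u x \<le> q (c *\<^sub>R x)"
              using sc[OF qC] ule[OF qC, of x] cp by (simp add: mult_left_mono)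
          qed
        qed
      qed
    qed
    moreover have "\<forall>x. u x \<le> p x"
    proof
      fix x
      obtain q where "q \<in> C" using False by blast
      moreover have "q x \<le> p x" using \<open>q \<in> C\<close> CA by (auto simp: A_def)
      ultimately show "u x \<le> p x" using ule[of q x] by linarith
    qed
    ultimately have "u \<in> A" by (simp add: A_def)
    moreover have "\<forall>a\<in>C. P a u" using ule by (simp add: P_def)
    ultimately show ?thesis by blast
  qed
  obtain m where mA: "m \<in> A" and mmin: "\<forall>a\<in>A. P m a \<longrightarrow> a = m"
    using predicate_Zorn[OF po ch] by blast
  have "linear m"
  proof (rule minimal_sublin_linear)
    show "sublin m" using mA by (simp add: A_def)
    fix q assume "sublin q" "\<forall>x. q x \<le> m x"
    moreover have "\<forall>x. q x \<le> p x"
      using calculation mA by (auto simp: A_def intro: order_trans)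
    ultimately show "q = m" using mmin by (auto simp: A_def P_def)
  qed
  then show ?thesis using mA by (auto simp: A_def)
qed


lemma HB_ext:
  fixes N :: "'v::real_vector \<Rightarrow> real" and F :: "'m::real_vector \<Rightarrow> 'v" and \<phi> :: "'m \<Rightarrow> real"
  assumes sN: "sublin N" and lF: "linear F" and lphi: "linear \<phi>" and sS: "subspace S"
    and dom: "\<And>m. m \<in> S \<Longrightarrow> \<phi> m \<le> N (F m)"
  shows "\<exists>l. linear l \<and> (\<forall>x. l x \<le> N x) \<and> (\<forall>m\<in>S. l (F m) = \<phi> m)"
proof -
  define p where "p x = (INF m\<in>S. N (x + F m) - \<phi> m)" for x
  have S0: "0 \<in> S" using sS by (rule subspace_0)
  have lb: "- N (- x) \<le> N (x + F m) - \<phi> m" if "m \<in> S" for x m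
  proof -
    have "N (F m) \<le> N (x + F m) + N (- x)"
      using sublin_add[OF sN, of "x + F m" "- x"] by simp
    then show ?thesis using dom[OF that] by simp
  qed
  have bdd: "bdd_below ((\<lambda>m. N (x + F m) - \<phi> m) ` S)" for x
    using lb by (auto intro!: bdd_belowI2[where m="- N (- x)"])
  have ple: "p x \<le> N (x + F m) - \<phi> m" if "m \<in> S" for x m
    unfolding p_def using that bdd by (intro cINF_lower) auto
  have pge: "a \<le> p x" if "\<And>m. m \<in> S \<Longrightarrow> a \<le> N (x + F m) - \<phi> m" for a x
    unfolding p_def using that S0 by (intro cINF_greatest) auto
  have Fadd: "F (a + b) = F a + F b" and Fsc: "F (c *\<^sub>R a) = c *\<^sub>R F a"
    and padd: "\<phi> (a + b) = \<phi> a + \<phi> b" and psc: "\<phi> (c *\<^sub>R a) = c * \<phi> a" for a b c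
    using lF lphi by (simp_all add: linear_add linear_scale)
  have sp: "sublin p"
    unfolding sublin_def
  proof (intro conjI allI impI)
    fix x y
    have "p (x + y) \<le> (N (x + F m1) - \<phi> m1) + (N (y + F m2) - \<phi> m2)"
      if "m1 \<in> S" "m2 \<in> S" for m1 m2
    proof -
      have "p (x + y) \<le> N ((x + y) + F (m1 + m2)) - \<phi> (m1 + m2)"
        using that sS by (intro ple) (simp add: subspace_add)
      also have "N ((x + y) + F (m1 + m2)) \<le> N (x + F m1) + N (y + F m2)"
        using sublin_add[OF sN, of "x + F m1" "y + F m2"]
        by (simp add: Fadd algebra_simps)
      finally show ?thesis by (simp add: padd algebra_simps)
    qed
    then have "p (x + y) - (N (y + F m2) - \<phi> m2) \<le> p x" if "m2 \<in> S" for m2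
      using that by (intro pge) (auto simp: algebra_simps)
    then have "p (x + y) - p x \<le> p y"
      by (intro pge) (auto simp: algebra_simps)
    then show "p (x + y) \<le> p x + p y" by simp
  next
    fix c :: real and x
    assume c: "0 \<le> c"
    show "p (c *\<^sub>R x) = c * p x"
    proof (cases "c = 0")
      case True
      have "p 0 = 0"
      proof (rule antisym)
        show "p 0 \<le> 0" using ple[OF S0, of 0] sublin_0[OF sN] lF lphi
          by (simp add: linear_0)
        show "0 \<le> p 0" by (intro pge) (use dom in simp)
      qed
      then show ?thesis using True by simp
    next
      case False
      then have cp: "c > 0" using c by simp
      show ?thesis
      proof (rule antisym)
        have "p (c *\<^sub>R x) \<le> c * (N (x + F m) - \<phi> m)" if "m \<in> S" for m
        proof -
          have "p (c *\<^sub>R x) \<le> N (c *\<^sub>R x + F (c *\<^sub>R m)) - \<phi> (c *\<^sub>R m)"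
            using that sS by (intro ple) (simp add: subspace_scale)
          also have "N (c *\<^sub>R x + F (c *\<^sub>R m)) = c * N (x + F m)"
            using sublin_scale[OF sN c, of "x + F m"] by (simp add: Fsc algebra_simps)
          finally show ?thesis by (simp add: psc algebra_simps)
        qed
        then have "p (c *\<^sub>R x) / c \<le> p x"
          using cp by (intro pge) (simp add: pos_divide_le_eq mult.commute)
        then show "p (c *\<^sub>R x) \<le> c * p x"
          using cp by (simp add: pos_divide_le_eq mult.commute)
        have "c * p x \<le> N (c *\<^sub>R x + F m) - \<phi> m" if "m \<in> S" for m
        proof -
          have "p x \<le> N (x + F ((1 / c) *\<^sub>R m)) - \<phi> ((1 / c) *\<^sub>R m)"
            using that sS by (intro ple) (simp add: subspace_scale)
          then have "c * p x \<le> c * (N (x + F ((1 / c) *\<^sub>R m)) - \<phi> ((1 / c) *\<^sub>R m))"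
            using cp by simp
          moreover have "c * N (x + F ((1 / c) *\<^sub>R m)) = N (c *\<^sub>R x + F m)"
            using sublin_scale[OF sN c, of "x + F ((1 / c) *\<^sub>R m)"] cp
            by (simp add: Fsc algebra_simps)
          ultimately show ?thesis using cp by (simp add: psc algebra_simps)
        qed
        then show "c * p x \<le> p (c *\<^sub>R x)"
          by (intro pge) auto
      qed
    qed
  qed
  obtain l where ll: "linear l" and lp: "\<forall>x. l x \<le> p x"
    using sublin_linear_minorant[OF sp] by blast
  have "l x \<le> N x" for x
    using lp ple[OF S0, of x] lF lphi by (simp add: linear_0) (meson order_trans)
  moreover have "l (F m) = \<phi> m" if "m \<in> S" for m
  proof -
    have mS: "- m \<in> S" using sS that by (simp add: subspace_neg)
    have FN: "F (- m) = - F m" "\<phi> (- m) = - \<phi> m"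
      using lF lphi by (simp_all add: linear_neg)
    have "l (F m) \<le> p (F m)" using lp by simp
    also have "\<dots> \<le> N (F m + F (- m)) - \<phi> (- m)" by (rule ple[OF mS])
    finally have 1: "l (F m) \<le> \<phi> m" using FN sublin_0[OF sN] by simp
    have "l (F (- m)) \<le> p (F (- m))" using lp by simp
    also have "\<dots> \<le> N (F (- m) + F m) - \<phi> m" by (rule ple[OF that])
    finally have 2: "- l (F m) \<le> - \<phi> m" using FN sublin_0[OF sN] ll by (simp add: linear_neg)
    show ?thesis using 1 2 by simp
  qed
  ultimately show ?thesis using ll by blast
qed


lemma sublin_norm: "sublin (\<lambda>x::'v::real_normed_vector. K * norm x)" if "K \<ge> 0"
  unfolding sublin_def using that
  by (auto simp: distrib_left[symmetric] intro: mult_left_mono norm_triangle_ineq)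

lemma linear_bounded_blinfun:
  fixes l :: "'v::real_normed_vector \<Rightarrow> real"
  assumes "linear l" "\<And>x. l x \<le> K * norm x" "K \<ge> 0"
  shows "bounded_linear l" "norm (Blinfun l) \<le> K" "blinfun_apply (Blinfun l) = l"
proof -
  have ab: "norm (l x) \<le> norm x * K" for x
  proof -
    have "l x \<le> K * norm x" "- l x \<le> K * norm x"
      using assms(2)[of x] assms(2)[of "- x"] assms(1) by (simp_all add: linear_neg)
    then show ?thesis by (simp add: abs_le_iff mult.commute)
  qed
  show bl: "bounded_linear l"
    using assms(1) ab by (intro bounded_linear_intro[where K=K]) (simp_all add: linear_add linear_scale)
  show "blinfun_apply (Blinfun l) = l" using bl by (rule bounded_linear_Blinfun_apply)
  then show "norm (Blinfun l) \<le> K"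
    using ab assms(3) by (intro norm_blinfun_bound) (simp_all add: mult.commute)
qed

lemma support_functional:
  fixes v :: "'b::real_normed_vector"
  shows "\<exists>g::'b \<Rightarrow>\<^sub>L real. norm g \<le> 1 \<and> blinfun_apply g v = norm v"
proof -
  have "\<exists>l. linear l \<and> (\<forall>x. l x \<le> 1 * norm x) \<and> (\<forall>t\<in>UNIV. l (t *\<^sub>R v) = t * norm v)"
    by (rule HB_ext[OF sublin_norm]) (auto intro: linear_scaleR_left linearI mult_right_mono simp: algebra_simps)
  then obtain l where "linear l" "\<forall>x. l x \<le> 1 * norm x" "\<forall>t. l (t *\<^sub>R v) = t * norm v" by auto
  then show ?thesis using linear_bounded_blinfun[of l 1]
    by (metis order_refl scaleR_one mult_1 zero_le_one)
qed


definition rk1 :: "('a::real_normed_vector \<Rightarrow>\<^sub>L real) \<Rightarrow> 'b::real_normed_vector \<Rightarrow> 'a \<Rightarrow>\<^sub>L 'b" where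
  "rk1 h v = Blinfun (\<lambda>z. blinfun_apply h z *\<^sub>R v)"

lemma rk1_apply: "blinfun_apply (rk1 h v) z = blinfun_apply h z *\<^sub>R v"
proof -
  have "bounded_linear (\<lambda>z. blinfun_apply h z *\<^sub>R v)"
    by (rule bounded_linear_compose[OF bounded_linear_scaleR_left blinfun.bounded_linear_right])
  then show ?thesis unfolding rk1_def by (simp add: bounded_linear_Blinfun_apply)
qed

theorem theorem3p6:
  fixes T :: "'a::real_normed_vector \<Rightarrow>\<^sub>L 'b::real_normed_vector"
  assumes "smooth_point T"
    and "norm_attainment_set T \<noteq> {}"
  shows "\<exists>x0. norm x0 = 1 \<and> norm_attainment_set T = {x0, - x0}
           \<and> smooth_point (blinfun_apply T x0)
           \<and> (\<forall>xs. norming_sequence T xs \<longrightarrow> x0 \<in> closure (span (range xs)))"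
proof -
  have T0: "T \<noteq> 0" and ex1: "\<exists>!f::('a \<Rightarrow>\<^sub>L 'b) \<Rightarrow>\<^sub>L real. norm f = 1 \<and> blinfun_apply f T = norm T"
    using assms(1) by (auto simp: smooth_point_def)
  then obtain \<Phi> :: "('a \<Rightarrow>\<^sub>L 'b) \<Rightarrow>\<^sub>L real" where \<Phi>1: "norm \<Phi> = 1" and \<Phi>T: "blinfun_apply \<Phi> T = norm T"
    and uniq: "\<And>\<psi>. norm \<psi> = 1 \<Longrightarrow> blinfun_apply \<psi> T = norm T \<Longrightarrow> \<psi> = \<Phi>"
    by (metis (no_types, lifting))
  define nT where "nT = norm T"
  have nTp: "nT > 0" using T0 by (simp add: nT_def)
  obtain x0 where x0n: "norm x0 = 1" and Tx0: "norm (blinfun_apply T x0) = nT"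
    using assms(2) by (auto simp: norm_attainment_set_def nT_def)
  have Lm: "blinfun_apply g (blinfun_apply S x) = blinfun_apply \<Phi> S"
    if g1: "norm g \<le> 1" and x1: "norm x \<le> 1" and gT: "blinfun_apply g (blinfun_apply T x) = nT"
    for g :: "'b \<Rightarrow>\<^sub>L real" and x S
  proof -
    have bl: "bounded_linear (\<lambda>S::'a \<Rightarrow>\<^sub>L 'b. blinfun_apply g (blinfun_apply S x))"
      by (rule bounded_linear_compose[OF blinfun.bounded_linear_right blinfun.bounded_linear_left])
    define \<psi> where "\<psi> = Blinfun (\<lambda>S::'a \<Rightarrow>\<^sub>L 'b. blinfun_apply g (blinfun_apply S x))"
    have \<psi>a: "blinfun_apply \<psi> S' = blinfun_apply g (blinfun_apply S' x)" for S'
      unfolding \<psi>_def using bl by (simp add: bounded_linear_Blinfun_apply)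
    have "norm (blinfun_apply \<psi> S') \<le> 1 * norm S'" for S'
    proof -
      have "norm (blinfun_apply g (blinfun_apply S' x)) \<le> norm g * norm (blinfun_apply S' x)"
        by (rule norm_blinfun)
      also have "\<dots> \<le> 1 * (norm S' * norm x)"
        using g1 norm_blinfun[of S' x] by (intro mult_mono) auto
      also have "\<dots> \<le> 1 * norm S'" using x1 by (simp add: mult_left_le)
      finally show ?thesis by (simp add: \<psi>a)
    qed
    then have le1: "norm \<psi> \<le> 1" by (intro norm_blinfun_bound) auto
    have "nT \<le> norm \<psi> * nT"
      using norm_blinfun[of \<psi> T] gT by (simp add: \<psi>a nT_def)
    then have "norm \<psi> \<ge> 1" using nTp by simp
    then have "\<psi> = \<Phi>" using le1 gT by (intro uniq) (auto simp: \<psi>a nT_def)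
    then show ?thesis using \<psi>a by simp
  qed
  obtain gx :: "'b \<Rightarrow>\<^sub>L real" where gx1: "norm gx \<le> 1" and gxT: "blinfun_apply gx (blinfun_apply T x0) = nT"
    using support_functional[of "blinfun_apply T x0"] Tx0 by auto
  obtain hx :: "'a \<Rightarrow>\<^sub>L real" where hx1: "norm hx \<le> 1" and hxx: "blinfun_apply hx x0 = 1"
    using support_functional[of x0] x0n by auto
  note Lx = Lm[OF gx1 _ gxT, simplified x0n, simplified]
  have MT: "norm_attainment_set T = {x0, - x0}"
  proof (intro equalityI subsetI)
    fix y assume "y \<in> norm_attainment_set T"
    then have y1: "norm y = 1" and Ty: "norm (blinfun_apply T y) = nT"
      by (auto simp: norm_attainment_set_def nT_def)
    obtain gy :: "'b \<Rightarrow>\<^sub>L real" where gy1: "norm gy \<le> 1" and gyT: "blinfun_apply gy (blinfun_apply T y) = nT"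
      using support_functional[of "blinfun_apply T y"] Ty by auto
    note Ly = Lm[OF gy1 _ gyT, simplified y1, simplified]
    define c where "c = blinfun_apply gy (blinfun_apply T x0) / nT"
    have uz: "blinfun_apply u (x0 - c *\<^sub>R y) = 0" for u :: "'a \<Rightarrow>\<^sub>L real"
    proof -
      have "blinfun_apply gx (blinfun_apply (rk1 u (blinfun_apply T x0)) x0)
          = blinfun_apply gy (blinfun_apply (rk1 u (blinfun_apply T x0)) y)"
        using Lx Ly by simp
      then have "blinfun_apply u x0 * nT = blinfun_apply u y * blinfun_apply gy (blinfun_apply T x0)"
        by (simp add: rk1_apply blinfun.scaleR_right gxT)
      then have "blinfun_apply u x0 = blinfun_apply u y * c"
        using nTp by (simp add: c_def field_simps)
      then show ?thesis by (simp add: blinfun.diff_right blinfun.scaleR_right)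
    qed
    obtain u :: "'a \<Rightarrow>\<^sub>L real" where "blinfun_apply u (x0 - c *\<^sub>R y) = norm (x0 - c *\<^sub>R y)"
      using support_functional by blast
    then have "x0 = c *\<^sub>R y" using uz[of u] by simp
    then have "\<bar>c\<bar> = 1" using x0n y1 by simp
    then have "c = 1 \<or> c = -1" by auto
    then show "y \<in> {x0, - x0}" using \<open>x0 = c *\<^sub>R y\<close> by auto
  next
    fix y assume "y \<in> {x0, - x0}"
    then show "y \<in> norm_attainment_set T"
      using x0n Tx0 by (auto simp: norm_attainment_set_def nT_def blinfun.minus_right)
  qed
  have sm: "smooth_point (blinfun_apply T x0)"
    unfolding smooth_point_def
  proof (rule conjI)
    show "blinfun_apply T x0 \<noteq> 0" using Tx0 nTp by auto
  next
    show "\<exists>!f::'b \<Rightarrow>\<^sub>L real. norm f = 1 \<and> blinfun_apply f (blinfun_apply T x0) = norm (blinfun_apply T x0)"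
    proof (rule ex1I)
    have "nT \<le> norm gx * nT" using norm_blinfun[of gx "blinfun_apply T x0"] gxT Tx0 by simp
    then have "norm gx = 1" using gx1 nTp by simp
    then show "norm gx = 1 \<and> blinfun_apply gx (blinfun_apply T x0) = norm (blinfun_apply T x0)"
      using gxT Tx0 by simp
    fix g :: "'b \<Rightarrow>\<^sub>L real"
    assume g: "norm g = 1 \<and> blinfun_apply g (blinfun_apply T x0) = norm (blinfun_apply T x0)"
    note Lg = Lm[of g x0, simplified x0n, simplified]
    show "g = gx"
    proof (rule blinfun_eqI)
      fix v
      have "blinfun_apply g (blinfun_apply (rk1 hx v) x0) = blinfun_apply gx (blinfun_apply (rk1 hx v) x0)"
        using Lg Lx g Tx0 by simp
      then show "blinfun_apply g v = blinfun_apply gx v" by (simp add: rk1_apply hxx)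
    qed
  qed
  qed
  have cl: "x0 \<in> closure (span (range xs))" if ns: "norming_sequence T xs" for xs
  proof (rule ccontr)
    assume nc: "x0 \<notin> closure (span (range xs))"
    define W where "W = span (range xs)"
    have W0: "0 \<in> W" by (simp add: W_def span_zero)
    define \<delta> where "\<delta> = infdist x0 W"
    have \<delta>p: "\<delta> > 0"
    proof -
      have "W \<noteq> {}" using W0 by auto
      then have "infdist x0 W \<noteq> 0" using nc in_closure_iff_infdist_zero[of W x0] by (simp add: W_def)
      then show ?thesis using infdist_nonneg[of x0 W] by (simp add: \<delta>_def)
    qed
    have key: "\<bar>a\<bar> * \<delta> \<le> norm (w + a *\<^sub>R x0)" if "w \<in> W" for w a
    proof (cases "a = 0")
      case True then show ?thesis by simp
    next
      case False
      have "- ((1 / a) *\<^sub>R w) \<in> W" using that by (simp add: W_def span_neg span_scale)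
      then have "\<delta> \<le> dist x0 (- ((1 / a) *\<^sub>R w))" unfolding \<delta>_def by (rule infdist_le)
      also have "\<dots> = norm (x0 + (1 / a) *\<^sub>R w)" by (simp add: dist_norm)
      finally have "\<bar>a\<bar> * \<delta> \<le> \<bar>a\<bar> * norm (x0 + (1 / a) *\<^sub>R w)"
        by (simp add: mult_left_mono)
      also have "\<dots> = norm (a *\<^sub>R (x0 + (1 / a) *\<^sub>R w))" by simp
      also have "a *\<^sub>R (x0 + (1 / a) *\<^sub>R w) = w + a *\<^sub>R x0"
        using False by (simp add: algebra_simps)
      finally show ?thesis .
    qed
    have subW: "subspace (W \<times> (UNIV :: real set))"
      unfolding subspace_def W_def
      by (auto simp: span_zero span_add span_scale mem_Times_iff)
    have "\<exists>l. linear l \<and> (\<forall>x. l x \<le> (1 / \<delta>) * norm x)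
              \<and> (\<forall>m\<in>W \<times> UNIV. l ((\<lambda>(w, a). w + a *\<^sub>R x0) m) = snd m)"
    proof (rule HB_ext[OF sublin_norm _ _ subW])
      show "0 \<le> 1 / \<delta>" using \<delta>p by simp
      show "linear (\<lambda>(w, a). w + a *\<^sub>R x0)"
        by (rule linearI) (auto simp: algebra_simps)
      show "linear (snd :: 'a \<times> real \<Rightarrow> real)"
        by (rule linearI) auto
      fix m :: "'a \<times> real" assume "m \<in> W \<times> UNIV"
      then obtain w a where m: "m = (w, a)" "w \<in> W" by auto
      have "a * \<delta> \<le> norm (w + a *\<^sub>R x0)" using key[OF m(2), of a] by (meson abs_ge_self mult_right_mono \<delta>p less_imp_le order_trans)
      then show "snd m \<le> 1 / \<delta> * norm ((\<lambda>(w, a). w + a *\<^sub>R x0) m)"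
        using \<delta>p m by (simp add: field_simps)
    qed
    then obtain f0 where f0l: "linear f0" and f0b: "\<forall>x. f0 x \<le> (1 / \<delta>) * norm x"
      and f0W: "\<forall>m\<in>W \<times> UNIV. f0 ((\<lambda>(w, a). w + a *\<^sub>R x0) m) = snd m" by blast
    define f where "f = Blinfun f0"
    have fa: "blinfun_apply f = f0"
      unfolding f_def using linear_bounded_blinfun(3)[OF f0l, of "1/\<delta>"] f0b \<delta>p by simp
    have fxs: "blinfun_apply f (xs n) = 0" for n
      using f0W[rule_format, of "(xs n, 0)"] by (simp add: fa W_def span_base)
    have fx0: "blinfun_apply f x0 = 1"
      using f0W[rule_format, of "(0, 1)"] W0 by (simp add: fa)
    define A where "A = rk1 f (blinfun_apply T x0)"
    have \<Phi>A: "blinfun_apply \<Phi> A = nT"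
      using Lx[of A] by (simp add: A_def rk1_apply fx0 gxT)
    have xs1: "norm (xs n) = 1" for n using ns by (simp add: norming_sequence_def)
    have lim: "(\<lambda>n. norm (blinfun_apply T (xs n))) \<longlonglongrightarrow> nT"
      using ns by (simp add: norming_sequence_def nT_def)
    have "\<exists>l. linear l \<and> (\<forall>S. l S \<le> 1 * norm S)
              \<and> (\<forall>m\<in>UNIV. l ((\<lambda>(a, b). a *\<^sub>R T + b *\<^sub>R A) m) = (\<lambda>(a, b). a * nT) m)"
    proof (rule HB_ext[OF sublin_norm])
      show "linear (\<lambda>(a::real, b::real). a *\<^sub>R T + b *\<^sub>R A)"
        by (rule linearI) (auto simp: algebra_simps)
      show "linear (\<lambda>(a::real, b::real). a * nT)"
        by (rule linearI) (auto simp: algebra_simps)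
      show "subspace (UNIV :: (real \<times> real) set)" by (rule subspace_UNIV)
      fix m :: "real \<times> real"
      obtain a b where m: "m = (a, b)" by fastforce
      have "a * nT \<le> norm (a *\<^sub>R T + b *\<^sub>R A)"
      proof (cases "a \<le> 0")
        case True
        then have "a * nT \<le> 0" using nTp by (simp add: mult_nonpos_nonneg)
        then show ?thesis by (meson norm_ge_zero order_trans)
      next
        case False
        have "a * norm (blinfun_apply T (xs n)) \<le> norm (a *\<^sub>R T + b *\<^sub>R A)" for n
        proof -
          have "blinfun_apply (a *\<^sub>R T + b *\<^sub>R A) (xs n) = a *\<^sub>R blinfun_apply T (xs n)"
            by (simp add: A_def rk1_apply fxs blinfun.add_left blinfun.scaleR_left)
          then have "norm (a *\<^sub>R blinfun_apply T (xs n)) \<le> norm (a *\<^sub>R T + b *\<^sub>R A) * norm (xs n)"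
            by (metis norm_blinfun)
          then show ?thesis using False xs1 by simp
        qed
        moreover have "(\<lambda>n. a * norm (blinfun_apply T (xs n))) \<longlonglongrightarrow> a * nT"
          by (intro tendsto_mult_left lim)
        ultimately show ?thesis by (intro LIMSEQ_le_const2) auto
      qed
      then show "(\<lambda>(a, b). a * nT) m \<le> 1 * norm ((\<lambda>(a, b). a *\<^sub>R T + b *\<^sub>R A) m)"
        using m by simp
    qed simp
    then obtain l0 where l0l: "linear l0" and l0b: "\<forall>S. l0 S \<le> 1 * norm S"
      and l0F: "\<forall>a b. l0 (a *\<^sub>R T + b *\<^sub>R A) = a * nT" by auto
    define lf where "lf = Blinfun l0"
    have lfa: "blinfun_apply lf = l0" and lfn: "norm lf \<le> 1"
      unfolding lf_def using linear_bounded_blinfun[OF l0l, of 1] l0b by auto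
    have lfT: "blinfun_apply lf T = nT" using l0F[rule_format, of 1 0] by (simp add: lfa)
    have lfA: "blinfun_apply lf A = 0" using l0F[rule_format, of 0 1] by (simp add: lfa)
    have "nT \<le> norm lf * nT" using norm_blinfun[of lf T] lfT by (simp add: nT_def)
    then have "norm lf = 1" using lfn nTp by simp
    then have "lf = \<Phi>" using lfT by (intro uniq) (auto simp: nT_def)
    then show False using lfA \<Phi>A nTp by simp
  qed
  show ?thesis using x0n MT sm cl by blast
qed

end
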